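(* Let $t$ be a closed term and $\pi\triangleright\ \vdash^{(m,e)} t:\mathtt{n}$ a derivation (with empty type context) in the silly multi type system. Then there is a $\to_w$-normal term $n$ and a reduction sequence $d: t\to_y^* n$ such that the number of $\to_{ym}$ steps in $d$ is exactly $m$ and the number of $\to_{yeAY}$ and $\to_{yeYN}$ steps in $d$ is exactly $e$.
   Context: Terms: $t ::= x \mid \lambda x.t \mid t\,u \mid t[x\backslash u]$ ($t[x\backslash u]$ an explicit substitution binding $x$ in $t$; terms up to $\alpha$). Values $v ::= \lambda x.t$. Substitution contexts $S ::= \langle\cdot\rangle\mid S[x\backslash u]$. Weak contexts $W ::= \langle\cdot\rangle \mid W\,t \mid t\,W \mid t[x\backslash W] \mid W[x\backslash u]$. For a class of contexts $K$, $K\langle\langle t\rangle\rangle$ is plugging without capture of free variables of $t$. Root rules: $S\langle\lambda x.t\rangle u\mapsto_m S\langle t[x\backslash u]\rangle$; $K\langle\langle x\rangle\rangle[x\backslash u]\mapsto_{e_K} K\langle\langle u\rangle\rangle[x\backslash u]$; $t[x\backslash S\langle v\rangle]\mapsto_{gcv} S\langle t\rangle$ if $x\notin\mathrm{fv}(t)$. $\to_w$ is the union of the closures under weak contexts of $\mapsto_m$, $\mapsto_{e_W}$ ($K$ = weak contexts), $\mapsto_{gcv}$. Call-by-silly strategy: answers $a ::= v\mid a[x\backslash a']$; name contexts $N ::= \langle\cdot\rangle\mid N t\mid N[x\backslash t]$; auxiliary contexts $A ::= \langle\cdot\rangle\mid a[x\backslash A]\mid A[x\backslash t]$; silly contexts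 $Y ::= A\langle N\rangle$; $\to_{ym} := Y\langle\mapsto_m\rangle$; $\to_{yeAY} := A\langle\mapsto_{e_Y}\rangle$; $\to_{yeYN} := Y\langle\mapsto_{e_N}\rangle$; $\to_{ygcv}:=Y\langle\mapsto_{gcv}\rangle$; $\to_y$ is their union. Silly multi types: linear types $L ::= \mathtt{n} \mid M\multimap L$; multi types $M ::= [L_i]_{i\in I}$ finite multisets ($\mathbf{0}$ empty, $\uplus$ sum). Type contexts $\Gamma$ map variables to multi types with finite support; $\uplus$ pointwise; $\Gamma\setminus\!\!\setminus x$ sets $x$ to $\mathbf{0}$. Rules: (ax) $x:[L]\vdash^{(0,1)} x:L$; (many) from $(\Gamma_i\vdash^{(m_i,e_i)} t : L_i)_{i\in I}$, $I$ finite possibly empty, infer $\uplus_i\Gamma_i\vdash^{(\sum m_i,\sum e_i)} t : [L_i]_{i\in I}$; ($\mathrm{ax}_\lambda$) $\vdash^{(0,0)}\lambda x.t:\mathtt{n}$; ($\lambda$) from $\Gamma\vdash^{(m,e)}t:L$ infer $\Gamma\setminus\!\!\setminus x\vdash^{(m,e)}\lambda x.t:\Gamma(x)\multimap L$; (@) from $\Gamma\vdash^{(m,e)} t : M\multimap L$ and $\Delta\vdash^{(m',e')} u : M\uplus[\mathtt{n}]$ infer $\Gamma\uplus\Delta\vdash^{(m+m'+1,e+e')} tu : L$; (ES) from $\Gamma\vdash^{(m,e)} t:L$ and $\Delta\vdash^{(m',e')}u:\Gamma(x)\uplus[\mathtt{n}]$ infer $(\Gamma\setminus\!\!\setminus x)\uplus\Delta\vdash^{(m+m',e+e')}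 t[x\backslash u]:L$. *)

theory Defs
  imports Main "HOL-Library.Multiset"
begin

text \<open>Terms up to alpha are represented with de Bruijn indices.
  ES t u stands for t[x\u], where x is index 0 in t.\<close>

datatype trm = Var nat | Lam trm | App trm trm | ES trm trm

fun shift :: "nat \<Rightarrow> nat \<Rightarrow> trm \<Rightarrow> trm" where
  "shift n k (Var i) = Var (if i < k then i else i + n)"
| "shift n k (Lam t) = Lam (shift n (Suc k) t)"
| "shift n k (App t u) = App (shift n k t) (shift n k u)"
| "shift n k (ES t u) = ES (shift n (Suc k) t) (shift n k u)"

fun fv :: "trm \<Rightarrow> nat set" where
  "fv (Var i) = {i}"
| "fv (Lam t) = {i. Suc i \<in> fv t}"
| "fv (App t u) = fv t \<union> fv u"
| "fv (ES t u) = {i. Suc i \<in> fv t} \<union> fv u"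

definition closed :: "trm \<Rightarrow> bool" where
  "closed t \<longleftrightarrow> fv t = {}"

inductive is_value :: "trm \<Rightarrow> bool" where
  "is_value (Lam t)"

text \<open>Weak contexts (no hole under lambda). Every element of ctx is a weak context.\<close>
datatype ctx = Hole | CAppL ctx trm | CAppR trm ctx | CESL ctx trm | CESR trm ctx

fun plug :: "ctx \<Rightarrow> trm \<Rightarrow> trm" where
  "plug Hole s = s"
| "plug (CAppL C t) s = App (plug C s) t"
| "plug (CAppR t C) s = App t (plug C s)"
| "plug (CESL C u) s = ES (plug C s) u"
| "plug (CESR t C) s = ES t (plug C s)"

fun depth :: "ctx \<Rightarrow> nat" where
  "depth Hole = 0"
| "depth (CAppL C t) = depth C"
| "depth (CAppR t C) = depth C"
| "depth (CESL C u) = Suc (depth C)"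
| "depth (CESR t C) = depth C"

fun ccomp :: "ctx \<Rightarrow> ctx \<Rightarrow> ctx" where
  "ccomp Hole D = D"
| "ccomp (CAppL C t) D = CAppL (ccomp C D) t"
| "ccomp (CAppR t C) D = CAppR t (ccomp C D)"
| "ccomp (CESL C u) D = CESL (ccomp C D) u"
| "ccomp (CESR t C) D = CESR t (ccomp C D)"

inductive is_S :: "ctx \<Rightarrow> bool" where
  "is_S Hole"
| "is_S S \<Longrightarrow> is_S (CESL S u)"

inductive is_answer :: "trm \<Rightarrow> bool" where
  "is_answer (Lam t)"
| "is_answer a \<Longrightarrow> is_answer a' \<Longrightarrow> is_answer (ES a a')"

inductive is_N :: "ctx \<Rightarrow> bool" where
  "is_N Hole"
| "is_N N \<Longrightarrow> is_N (CAppL N t)"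
| "is_N N \<Longrightarrow> is_N (CESL N t)"

inductive is_A :: "ctx \<Rightarrow> bool" where
  "is_A Hole"
| "is_answer a \<Longrightarrow> is_A A \<Longrightarrow> is_A (CESR a A)"
| "is_A A \<Longrightarrow> is_A (CESL A t)"

definition is_Y :: "ctx \<Rightarrow> bool" where
  "is_Y C \<longleftrightarrow> (\<exists>A N. is_A A \<and> is_N N \<and> C = ccomp A N)"

definition root_m :: "trm \<Rightarrow> trm \<Rightarrow> bool" where
  "root_m s s' \<longleftrightarrow> (\<exists>S b u. is_S S \<and> s = App (plug S (Lam b)) u
      \<and> s' = plug S (ES b (shift (depth S) 0 u)))"

definition root_e :: "(ctx \<Rightarrow> bool) \<Rightarrow> trm \<Rightarrow> trm \<Rightarrow> bool" where
  "root_e P s s' \<longleftrightarrow> (\<exists>K u. P K \<and> s = ES (plug K (Var (depth K))) u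
      \<and> s' = ES (plug K (shift (Suc (depth K)) 0 u)) u)"

text \<open>t[x\S<v>] \<mapsto>gcv S<t> if x not free in t (i.e. t is a shifted term)\<close>
definition root_gcv :: "trm \<Rightarrow> trm \<Rightarrow> bool" where
  "root_gcv s s' \<longleftrightarrow> (\<exists>r S v. is_S S \<and> is_value v \<and> s = ES (shift 1 0 r) (plug S v)
      \<and> s' = plug S (shift (depth S) 0 r))"

definition wstep :: "trm \<Rightarrow> trm \<Rightarrow> bool" where
  "wstep t t' \<longleftrightarrow> (\<exists>W s s'. t = plug W s \<and> t' = plug W s'
      \<and> (root_m s s' \<or> root_e (\<lambda>_. True) s s' \<or> root_gcv s s'))"

definition w_normal :: "trm \<Rightarrow> bool" where
  "w_normal t \<longleftrightarrow> \<not> (\<exists>t'. wstep t t')"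

datatype ykind = Ym | YeAY | YeYN | Ygcv

fun ystep :: "trm \<Rightarrow> ykind \<Rightarrow> trm \<Rightarrow> bool" where
  "ystep t Ym t' = (\<exists>Y s s'. is_Y Y \<and> t = plug Y s \<and> t' = plug Y s' \<and> root_m s s')"
| "ystep t YeAY t' = (\<exists>A s s'. is_A A \<and> t = plug A s \<and> t' = plug A s' \<and> root_e is_Y s s')"
| "ystep t YeYN t' = (\<exists>Y s s'. is_Y Y \<and> t = plug Y s \<and> t' = plug Y s' \<and> root_e is_N s s')"
| "ystep t Ygcv t' = (\<exists>Y s s'. is_Y Y \<and> t = plug Y s \<and> t' = plug Y s' \<and> root_gcv s s')"

inductive ysteps :: "trm \<Rightarrow> ykind list \<Rightarrow> trm \<Rightarrow> bool" where
  refl: "ysteps t [] t"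
| step: "ystep t k t' \<Longrightarrow> ysteps t' ks t'' \<Longrightarrow> ysteps t (k # ks) t''"

datatype ltype = TN | Arr "ltype multiset" ltype

type_synonym tctx = "nat \<Rightarrow> ltype multiset"

definition empty_ctx :: tctx where "empty_ctx = (\<lambda>_. {#})"

text \<open>lty G t L m e : G |-^(m,e) t : L ;  mty G t M m e : G |-^(m,e) t : M (rule many)\<close>
inductive lty :: "tctx \<Rightarrow> trm \<Rightarrow> ltype \<Rightarrow> nat \<Rightarrow> nat \<Rightarrow> bool"
  and mty :: "tctx \<Rightarrow> trm \<Rightarrow> ltype multiset \<Rightarrow> nat \<Rightarrow> nat \<Rightarrow> bool" where
  ax: "lty (empty_ctx(i := {#L#})) (Var i) L 0 1"
| ax_lam: "lty empty_ctx (Lam t) TN 0 0"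
| lam: "lty G t L m e \<Longrightarrow> lty (\<lambda>i. G (Suc i)) (Lam t) (Arr (G 0) L) m e"
| app: "lty G t (Arr M L) m e \<Longrightarrow> mty D u (M + {#TN#}) m' e'
        \<Longrightarrow> lty (\<lambda>i. G i + D i) (App t u) L (m + m' + 1) (e + e')"
| es: "lty G t L m e \<Longrightarrow> mty D u (G 0 + {#TN#}) m' e'
        \<Longrightarrow> lty (\<lambda>i. G (Suc i) + D i) (ES t u) L (m + m') (e + e')"
| many_nil: "mty empty_ctx t {#} 0 0"
| many_cons: "lty G t L m e \<Longrightarrow> mty D t M m' e'
        \<Longrightarrow> mty (\<lambda>i. G i + D i) t (add_mset L M) (m + m') (e + e')"

end

theory Submission
  imports Defs
begin

definition cadd :: "tctx \<Rightarrow> tctx \<Rightarrow> tctx" where "cadd G D = (\<lambda>i. G i + D i)"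
definition cdrop :: "nat \<Rightarrow> tctx \<Rightarrow> tctx" where "cdrop d G = (\<lambda>i. G (i + d))"
definition shc :: "nat \<Rightarrow> nat \<Rightarrow> tctx \<Rightarrow> tctx" where
  "shc n k G = (\<lambda>i. if i < k then G i else if i < k + n then {#} else G (i - n))"

lemma cadd_apply[simp]: "cadd G D i = G i + D i" by (simp add: cadd_def)
lemma cdrop_apply[simp]: "cdrop d G i = G (i + d)" by (simp add: cdrop_def)
lemma empty_apply: "empty_ctx i = {#}" by (simp add: empty_ctx_def)

lemma plug_ccomp[simp]: "plug (ccomp C D) s = plug C (plug D s)" by (induction C) auto
lemma depth_ccomp[simp]: "depth (ccomp C D) = depth C + depth D" by (induction C) auto
lemma ccomp_Hole[simp]: "ccomp C Hole = C" by (induction C) auto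

lemma ax': "H = empty_ctx(i := {#L#}) \<Longrightarrow> lty H (Var i) L 0 1"
  using ax by simp
lemma lam': "lty G t L m e \<Longrightarrow> H = (\<lambda>i. G (Suc i)) \<Longrightarrow> T = Arr (G 0) L \<Longrightarrow> lty H (Lam t) T m e"
  using lam by simp
lemma app': "lty G t (Arr M L) m e \<Longrightarrow> mty D u (M + {#TN#}) m' e' \<Longrightarrow> H = cadd G D
   \<Longrightarrow> mm = m + m' + 1 \<Longrightarrow> ee = e + e' \<Longrightarrow> lty H (App t u) L mm ee"
  using app by (simp add: cadd_def)
lemma es': "lty G t L m e \<Longrightarrow> mty D u (G 0 + {#TN#}) m' e' \<Longrightarrow> H = cadd (\<lambda>i. G (Suc i)) D
   \<Longrightarrow> mm = m + m' \<Longrightarrow> ee = e + e' \<Longrightarrow> lty H (ES t u) L mm ee"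
  using es by (simp add: cadd_def)
lemma many_cons': "lty G t L m e \<Longrightarrow> mty D t M m' e' \<Longrightarrow> H = cadd G D
   \<Longrightarrow> mm = m + m' \<Longrightarrow> ee = e + e' \<Longrightarrow> mty H t (add_mset L M) mm ee"
  using many_cons by (simp add: cadd_def)

inductive_cases lty_VarE: "lty G (Var i) L m e"
inductive_cases lty_LamE: "lty G (Lam t) L m e"
inductive_cases lty_AppE: "lty G (App t u) L m e"
inductive_cases lty_ESE: "lty G (ES t u) L m e"

lemma lty_App_inv: "lty G (App t u) L m e \<Longrightarrow> \<exists>G1 M m1 e1 D m2 e2. G = cadd G1 D \<and> m = m1 + m2 + 1
   \<and> e = e1 + e2 \<and> lty G1 t (Arr M L) m1 e1 \<and> mty D u (M + {#TN#}) m2 e2"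
  apply (erule lty_AppE)
  subgoal for Ga M ma ea D m' e'
    by (rule exI[of _ Ga], rule exI[of _ M], rule exI[of _ ma], rule exI[of _ ea], rule exI[of _ D],
        rule exI[of _ m'], rule exI[of _ e']) (simp add: cadd_def)
  done
lemma lty_ES_inv: "lty G (ES t u) L m e \<Longrightarrow> \<exists>G1 m1 e1 D m2 e2. G = cadd (\<lambda>i. G1 (Suc i)) D \<and> m = m1 + m2
   \<and> e = e1 + e2 \<and> lty G1 t L m1 e1 \<and> mty D u (G1 0 + {#TN#}) m2 e2"
  apply (erule lty_ESE)
  subgoal for Ga ma ea D m' e'
    by (rule exI[of _ Ga], rule exI[of _ ma], rule exI[of _ ea], rule exI[of _ D],
        rule exI[of _ m'], rule exI[of _ e']) (simp add: cadd_def)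
  done
lemma lty_Lam_inv: "lty G (Lam t) L m e \<Longrightarrow> (G = empty_ctx \<and> L = TN \<and> m = 0 \<and> e = 0) \<or>
   (\<exists>G1 L1. G = (\<lambda>i. G1 (Suc i)) \<and> L = Arr (G1 0) L1 \<and> lty G1 t L1 m e)"
  by (erule lty_LamE) auto
lemma lty_Var_inv: "lty G (Var i) L m e \<Longrightarrow> G = empty_ctx(i := {#L#}) \<and> m = 0 \<and> e = 1"
  by (erule lty_VarE) auto

lemma mty_empty: "mty D t M m e \<Longrightarrow> M = {#} \<Longrightarrow> D = empty_ctx \<and> m = 0 \<and> e = 0"
  by (erule mty.cases) auto

lemma mty_single_aux:
  "lty G t L m e \<Longrightarrow> True"
  "mty D t M m e \<Longrightarrow> M = {#L'#} \<Longrightarrow> lty D t L' m e"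
proof (induction rule: lty_mty.inducts)
  case (many_cons G t L m e D M m' e')
  then have "M = {#}" "L = L'" by (auto simp: add_mset_eq_single)
  with many_cons mty_empty[of D t M m' e'] show ?case
    by (simp add: empty_ctx_def)
qed auto

lemma mty_single: "mty D t {#L#} m e \<Longrightarrow> lty D t L m e"
  using mty_single_aux(2) by blast

lemma mty_single_intro: "lty D t L m e \<Longrightarrow> mty D t {#L#} m e"
  by (rule many_cons'[OF _ many_nil]) (auto simp: cadd_def empty_apply)

lemma mty_split_aux:
  "lty G t L m e \<Longrightarrow> True"
  "mty D t M m e \<Longrightarrow> \<forall>M1 M2. M = M1 + M2 \<longrightarrow> (\<exists>D1 D2 m1 m2 e1 e2. mty D1 t M1 m1 e1 \<and> mty D2 t M2 m2 e2
     \<and> D = cadd D1 D2 \<and> m = m1 + m2 \<and> e = e1 + e2)"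
proof (induction rule: lty_mty.inducts)
  case (many_nil t)
  show ?case
  proof (intro allI impI)
    fix M1 M2 :: "ltype multiset" assume "{#} = M1 + M2"
    then have "M1 = {#}" "M2 = {#}" by auto
    moreover have "empty_ctx = cadd empty_ctx empty_ctx" by (rule ext) (simp add: empty_apply)
    ultimately show "\<exists>D1 D2 m1 m2 e1 e2. mty D1 t M1 m1 e1 \<and> mty D2 t M2 m2 e2
     \<and> empty_ctx = cadd D1 D2 \<and> (0::nat) = m1 + m2 \<and> (0::nat) = e1 + e2"
      using lty_mty.many_nil[of t] by (intro exI[of _ empty_ctx] exI[of _ 0]) auto
  qed
next
  case (many_cons G t L m e D M m' e')
  show ?case
  proof (intro allI impI)
    fix M1 M2 assume h: "add_mset L M = M1 + M2"
    show "\<exists>D1 D2 m1 m2 e1 e2. mty D1 t M1 m1 e1 \<and> mty D2 t M2 m2 e2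
     \<and> (\<lambda>i. G i + D i) = cadd D1 D2 \<and> m + m' = m1 + m2 \<and> e + e' = e1 + e2"
    proof (cases "L \<in># M1")
      case True
      then obtain M1' where M1: "M1 = add_mset L M1'" by (metis multi_member_split)
      with h have "M = M1' + M2" by simp
      with many_cons.IH(2) obtain D1 D2 m1 m2 e1 e2 where
        d: "mty D1 t M1' m1 e1" "mty D2 t M2 m2 e2" "D = cadd D1 D2" "m' = m1 + m2" "e' = e1 + e2" by blast
      show ?thesis
        apply (rule exI[of _ "cadd G D1"], rule exI[of _ D2], rule exI[of _ "m + m1"], rule exI[of _ m2],
               rule exI[of _ "e + e1"], rule exI[of _ e2])
        using d many_cons.hyps(1) M1 by (auto intro!: many_cons' simp: cadd_def add.assoc)
    next
      case False
      with h have "L \<in># M2" by (metis add_mset_add_single union_iff multi_member_this)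
      then obtain M2' where M2: "M2 = add_mset L M2'" by (metis multi_member_split)
      with h have "M = M1 + M2'" by simp
      with many_cons.IH(2) obtain D1 D2 m1 m2 e1 e2 where
        d: "mty D1 t M1 m1 e1" "mty D2 t M2' m2 e2" "D = cadd D1 D2" "m' = m1 + m2" "e' = e1 + e2" by blast
      show ?thesis
        apply (rule exI[of _ D1], rule exI[of _ "cadd G D2"], rule exI[of _ m1], rule exI[of _ "m + m2"],
               rule exI[of _ e1], rule exI[of _ "e + e2"])
        using d many_cons.hyps(1) M2 by (auto intro!: many_cons' simp: cadd_def add_ac)
    qed
  qed
qed auto

lemma mty_split: "mty D t (M1 + M2) m e \<Longrightarrow> \<exists>D1 D2 m1 m2 e1 e2. mty D1 t M1 m1 e1 \<and> mty D2 t M2 m2 e2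
     \<and> D = cadd D1 D2 \<and> m = m1 + m2 \<and> e = e1 + e2"
  using mty_split_aux(2) by blast

lemma shift_0[simp]: "shift 0 k t = t" by (induction t arbitrary: k) auto
lemma shift_shift: "shift a k (shift b k t) = shift (a + b) k t"
  by (induction t arbitrary: k) auto

lemma shc_Suc: "(\<lambda>i. shc n (Suc k) G (Suc i)) = shc n k (\<lambda>i. G (Suc i))"
  by (rule ext) (auto simp: shc_def Suc_diff_le)
lemma shc_0[simp]: "shc n (Suc k) G 0 = G 0" by (simp add: shc_def)
lemma shc_cadd: "shc n k (cadd G D) = cadd (shc n k G) (shc n k D)"
  by (rule ext) (auto simp: shc_def)
lemma shc_add: "shc n k (\<lambda>i. G i + D i) = (\<lambda>i. shc n k G i + shc n k D i)"
  by (rule ext) (auto simp: shc_def)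
lemma shc_empty[simp]: "shc n k empty_ctx = empty_ctx"
  by (rule ext) (auto simp: shc_def empty_apply)

lemma shift_typing:
  "lty G t L m e \<Longrightarrow> lty (shc n k G) (shift n k t) L m e"
  "mty D t M m e \<Longrightarrow> mty (shc n k D) (shift n k t) M m e"
proof (induction arbitrary: k and k rule: lty_mty.inducts)
  case (ax i L)
  show ?case
    by (simp only: shift.simps, rule ax') (auto simp: shc_def fun_eq_iff empty_apply)
next
  case (ax_lam t)
  then show ?case using lty_mty.ax_lam by simp
next
  case (lam G t L m e)
  show ?case
    using lam.IH[of "Suc k"] by (auto intro!: lam' simp: shc_Suc)
next
  case (app G t M L m e D u m' e')
  show ?case
    using app.IH[of k] by (auto intro!: app' simp: shc_add cadd_def)
next
  case (es G t L m e D u m' e')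
  show ?case
    using es.IH(1)[of "Suc k"] es.IH(2)[of k]
    by (auto intro!: es' simp: shc_def fun_eq_iff Suc_diff_le)
next
  case (many_nil t)
  then show ?case using lty_mty.many_nil by simp
next
  case (many_cons G t L m e D M m' e')
  then show ?case by (auto intro!: many_cons' simp: shc_add cadd_def)
qed


lemma S_m: "is_S S \<Longrightarrow> lty G (plug S (Lam b)) (Arr M L) m e \<Longrightarrow> mty D u (M + {#TN#}) m' e'
  \<Longrightarrow> lty (cadd G D) (plug S (ES b (shift (depth S) 0 u))) L (m + m') (e + e')"
proof (induction arbitrary: G m e D u m' e' rule: is_S.induct)
  case 1
  from lty_Lam_inv[OF 1(1)[simplified]] obtain G' L' where
    h: "G = (\<lambda>i. G' (Suc i))" "Arr M L = Arr (G' 0) L'" "lty G' b L' m e" by auto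
  show ?case using h 1(2) by (auto intro!: es' simp: cadd_def)
next
  case (2 S w)
  obtain G1 m1 e1 D1 m2 e2 where 1: "G = cadd (\<lambda>i. G1 (Suc i)) D1" "m = m1 + m2"
   "e = e1 + e2" "lty G1 (plug S (Lam b)) (Arr M L) m1 e1" "mty D1 w (G1 0 + {#TN#}) m2 e2"
    using lty_ES_inv[OF 2(3)[simplified]] by blast
  have u: "mty (shc 1 0 D) (shift 1 0 u) (M + {#TN#}) m' e'" using 2(4) by (rule shift_typing)
  have "lty (cadd G1 (shc 1 0 D)) (plug S (ES b (shift (depth S) 0 (shift 1 0 u)))) L (m1 + m') (e1 + e')"
    using 2(2)[OF 1(4) u] .
  then have h: "lty (cadd G1 (shc 1 0 D)) (plug S (ES b (shift (Suc (depth S)) 0 u))) L (m1 + m') (e1 + e')"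
    by (simp add: shift_shift)
  show ?case
    apply simp
    apply (rule es'[OF h])
    using 1 by (auto simp: shc_def cadd_def fun_eq_iff)
qed

lemma root_m_SR: "root_m s s' \<Longrightarrow> lty G s L m e \<Longrightarrow> m > 0 \<and> lty G s' L (m - 1) e"
  unfolding root_m_def
proof (elim exE conjE)
  fix S b u assume S: "is_S S" and s: "s = App (plug S (Lam b)) u"
    and s': "s' = plug S (ES b (shift (depth S) 0 u))" and t: "lty G s L m e"
  obtain G1 M m1 e1 D m2 e2 where 1: "G = cadd G1 D" "m = m1 + m2 + 1"
   "e = e1 + e2" "lty G1 (plug S (Lam b)) (Arr M L) m1 e1" "mty D u (M + {#TN#}) m2 e2"
    using lty_App_inv[OF t[unfolded s]] by blast
  have "lty (cadd G1 D) s' L (m1 + m2) (e1 + e2)"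
    unfolding s' using S_m[OF S 1(4) 1(5)] by simp
  then show "m > 0 \<and> lty G s' L (m - 1) e" using 1 by simp
qed

lemma answer_TN: "is_answer a \<Longrightarrow> lty G a TN m e \<Longrightarrow> G = empty_ctx \<and> m = 0 \<and> e = 0"
proof (induction arbitrary: G m e rule: is_answer.induct)
  case (1 t)
  then show ?case using lty_Lam_inv[OF 1] by auto
next
  case (2 a a')
  obtain G1 m1 e1 D m2 e2 where 1: "G = cadd (\<lambda>i. G1 (Suc i)) D" "m = m1 + m2"
   "e = e1 + e2" "lty G1 a TN m1 e1" "mty D a' (G1 0 + {#TN#}) m2 e2"
    using lty_ES_inv[OF 2(5)] by blast
  with 2 have g: "G1 = empty_ctx" "m1 = 0" "e1 = 0" by auto
  with 1 have "mty D a' {#TN#} m2 e2" by (simp add: empty_apply)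
  then have "lty D a' TN m2 e2" by (rule mty_single)
  with 2 have "D = empty_ctx" "m2 = 0" "e2 = 0" by auto
  with g 1 show ?case by (simp add: empty_apply cadd_def empty_ctx_def)
qed

definition REPL :: "ctx \<Rightarrow> tctx \<Rightarrow> trm \<Rightarrow> ltype \<Rightarrow> nat \<Rightarrow> nat \<Rightarrow> (ltype \<Rightarrow> bool) \<Rightarrow> bool" where
  "REPL C G x L m e P \<longleftrightarrow> (\<exists>Gx Lx mx ex Gr mr er. P Lx \<and> lty Gx x Lx mx ex
     \<and> G = cadd Gr (cdrop (depth C) Gx) \<and> m = mr + mx \<and> e = er + ex
     \<and> (\<forall>x' G' m' e'. lty G' x' Lx m' e' \<longrightarrow> (\<forall>i<depth C. G' i = Gx i)
          \<longrightarrow> lty (cadd Gr (cdrop (depth C) G')) (plug C x') L (mr + m') (er + e')))"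

lemma cadd_empty_cdrop0: "cadd empty_ctx (cdrop 0 G) = G"
  by (rule ext) (simp add: empty_apply)

lemma N_repl: "is_N N \<Longrightarrow> lty G (plug N x) L m e \<Longrightarrow> REPL N G x L m e (\<lambda>_. True)"
proof (induction arbitrary: G L m e rule: is_N.induct)
  case 1
  show ?case unfolding REPL_def
    apply (rule exI[of _ G], rule exI[of _ L], rule exI[of _ m], rule exI[of _ e], rule exI[of _ empty_ctx],
      rule exI[of _ 0], rule exI[of _ 0])
    using 1 by (simp add: cadd_empty_cdrop0)
next
  case (2 N t)
  obtain G1 M m1 e1 D m2 e2 where 1: "G = cadd G1 D" "m = m1 + m2 + 1"
   "e = e1 + e2" "lty G1 (plug N x) (Arr M L) m1 e1" "mty D t (M + {#TN#}) m2 e2"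
    using lty_App_inv[OF 2(3)[simplified]] by blast
  from 2(2)[OF 1(4)] obtain Gx Lx mx ex Gr mr er where
    r: "lty Gx x Lx mx ex" "G1 = cadd Gr (cdrop (depth N) Gx)" "m1 = mr + mx" "e1 = er + ex"
    "\<forall>x' G' m' e'. lty G' x' Lx m' e' \<longrightarrow> (\<forall>i<depth N. G' i = Gx i)
        \<longrightarrow> lty (cadd Gr (cdrop (depth N) G')) (plug N x') (Arr M L) (mr + m') (er + e')"
    unfolding REPL_def by blast
  show ?case unfolding REPL_def
  proof (rule exI[of _ Gx], rule exI[of _ Lx], rule exI[of _ mx], rule exI[of _ ex], rule exI[of _ "cadd Gr D"], rule exI[of _ "mr + m2 + 1"], rule exI[of _ "er + e2"], intro conjI allI impI)
    show "G = cadd (cadd Gr D) (cdrop (depth (CAppL N t)) Gx)"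
      using r 1 by (auto simp: fun_eq_iff add_ac)
  next
    fix x' G' m' e' assume h: "lty G' x' Lx m' e'" "\<forall>i<depth (CAppL N t). G' i = Gx i"
    then have "lty (cadd Gr (cdrop (depth N) G')) (plug N x') (Arr M L) (mr + m') (er + e')"
      using r(5) by auto
    then show "lty (cadd (cadd Gr D) (cdrop (depth (CAppL N t)) G')) (plug (CAppL N t) x') L
      (mr + m2 + 1 + m') (er + e2 + e')"
      using r 1 by (auto intro!: app' simp: fun_eq_iff add_ac)
  qed (use r 1 in auto)
next
  case (3 N t)
  obtain G1 m1 e1 D m2 e2 where 1: "G = cadd (\<lambda>i. G1 (Suc i)) D" "m = m1 + m2"
   "e = e1 + e2" "lty G1 (plug N x) L m1 e1" "mty D t (G1 0 + {#TN#}) m2 e2"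
    using lty_ES_inv[OF 3(3)[simplified]] by blast
  from 3(2)[OF 1(4)] obtain Gx Lx mx ex Gr mr er where
    r: "lty Gx x Lx mx ex" "G1 = cadd Gr (cdrop (depth N) Gx)" "m1 = mr + mx" "e1 = er + ex"
    "\<forall>x' G' m' e'. lty G' x' Lx m' e' \<longrightarrow> (\<forall>i<depth N. G' i = Gx i)
        \<longrightarrow> lty (cadd Gr (cdrop (depth N) G')) (plug N x') L (mr + m') (er + e')"
    unfolding REPL_def by blast
  show ?case unfolding REPL_def
  proof (rule exI[of _ Gx], rule exI[of _ Lx], rule exI[of _ mx], rule exI[of _ ex], rule exI[of _ "cadd (\<lambda>i. Gr (Suc i)) D"], rule exI[of _ "mr + m2"], rule exI[of _ "er + e2"], intro conjI allI impI)
    show "G = cadd (cadd (\<lambda>i. Gr (Suc i)) D) (cdrop (depth (CESL N t)) Gx)"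
      using r 1 by (auto simp: fun_eq_iff add_ac)
  next
    fix x' G' m' e' assume h: "lty G' x' Lx m' e'" "\<forall>i<depth (CESL N t). G' i = Gx i"
    then have "lty (cadd Gr (cdrop (depth N) G')) (plug N x') L (mr + m') (er + e')"
      using r(5) by auto
    moreover have "G' (depth N) = Gx (depth N)" using h by auto
    ultimately show "lty (cadd (cadd (\<lambda>i. Gr (Suc i)) D) (cdrop (depth (CESL N t)) G')) (plug (CESL N t) x') L
      (mr + m2 + m') (er + e2 + e')"
      using r 1 by (auto intro!: es' simp: fun_eq_iff add_ac)
  qed (use r 1 in auto)
qed


lemma A_repl: "is_A A \<Longrightarrow> lty G (plug A x) TN m e \<Longrightarrow> REPL A G x TN m e (\<lambda>L. L = TN)"
proof (induction arbitrary: G m e rule: is_A.induct)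
  case 1
  show ?case unfolding REPL_def
    apply (rule exI[of _ G], rule exI[of _ TN], rule exI[of _ m], rule exI[of _ e], rule exI[of _ empty_ctx],
      rule exI[of _ 0], rule exI[of _ 0])
    using 1 by (simp add: cadd_empty_cdrop0)
next
  case (2 a A)
  obtain G1 m1 e1 D m2 e2 where 1: "G = cadd (\<lambda>i. G1 (Suc i)) D" "m = m1 + m2"
   "e = e1 + e2" "lty G1 a TN m1 e1" "mty D (plug A x) (G1 0 + {#TN#}) m2 e2"
    using lty_ES_inv[OF 2(4)[simplified]] by blast
  have g: "G1 = empty_ctx" "m1 = 0" "e1 = 0" using answer_TN[OF 2(1) 1(4)] by auto
  with 1 have "mty D (plug A x) {#TN#} m2 e2" by (simp add: empty_apply)
  then have d: "lty D (plug A x) TN m2 e2" by (rule mty_single)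
  have GD: "G = D" using 1(1) g by (simp add: fun_eq_iff empty_apply)
  from 2(3)[OF d] obtain Gx Lx mx ex Gr mr er where
    r: "Lx = TN" "lty Gx x Lx mx ex" "D = cadd Gr (cdrop (depth A) Gx)" "m2 = mr + mx" "e2 = er + ex"
    "\<forall>x' G' m' e'. lty G' x' Lx m' e' \<longrightarrow> (\<forall>i<depth A. G' i = Gx i)
        \<longrightarrow> lty (cadd Gr (cdrop (depth A) G')) (plug A x') TN (mr + m') (er + e')"
    unfolding REPL_def by blast
  show ?case unfolding REPL_def
  proof (rule exI[of _ Gx], rule exI[of _ Lx], rule exI[of _ mx], rule exI[of _ ex], rule exI[of _ Gr],
      rule exI[of _ mr], rule exI[of _ er], intro conjI allI impI)
    fix x' G' m' e' assume h: "lty G' x' Lx m' e'" "\<forall>i<depth (CESR a A). G' i = Gx i"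
    then have "lty (cadd Gr (cdrop (depth A) G')) (plug A x') TN (mr + m') (er + e')"
      using r(6) by auto
    then have "mty (cadd Gr (cdrop (depth A) G')) (plug A x') {#TN#} (mr + m') (er + e')"
      by (rule mty_single_intro)
    then show "lty (cadd Gr (cdrop (depth (CESR a A)) G')) (plug (CESR a A) x') TN (mr + m') (er + e')"
      using 1(4) g by (auto intro!: es' simp: fun_eq_iff empty_apply)
  qed (use r 1 g GD in auto)
next
  case (3 A t)
  obtain G1 m1 e1 D m2 e2 where 1: "G = cadd (\<lambda>i. G1 (Suc i)) D" "m = m1 + m2"
   "e = e1 + e2" "lty G1 (plug A x) TN m1 e1" "mty D t (G1 0 + {#TN#}) m2 e2"
    using lty_ES_inv[OF 3(3)[simplified]] by blast
  from 3(2)[OF 1(4)] obtain Gx Lx mx ex Gr mr er where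
    r: "Lx = TN" "lty Gx x Lx mx ex" "G1 = cadd Gr (cdrop (depth A) Gx)" "m1 = mr + mx" "e1 = er + ex"
    "\<forall>x' G' m' e'. lty G' x' Lx m' e' \<longrightarrow> (\<forall>i<depth A. G' i = Gx i)
        \<longrightarrow> lty (cadd Gr (cdrop (depth A) G')) (plug A x') TN (mr + m') (er + e')"
    unfolding REPL_def by blast
  show ?case unfolding REPL_def
  proof (rule exI[of _ Gx], rule exI[of _ Lx], rule exI[of _ mx], rule exI[of _ ex], rule exI[of _ "cadd (\<lambda>i. Gr (Suc i)) D"],
      rule exI[of _ "mr + m2"], rule exI[of _ "er + e2"], intro conjI allI impI)
    show "G = cadd (cadd (\<lambda>i. Gr (Suc i)) D) (cdrop (depth (CESL A t)) Gx)"
      using r 1 by (auto simp: fun_eq_iff add_ac)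
  next
    fix x' G' m' e' assume h: "lty G' x' Lx m' e'" "\<forall>i<depth (CESL A t). G' i = Gx i"
    then have "lty (cadd Gr (cdrop (depth A) G')) (plug A x') TN (mr + m') (er + e')"
      using r(6) by auto
    moreover have "G' (depth A) = Gx (depth A)" using h by auto
    ultimately show "lty (cadd (cadd (\<lambda>i. Gr (Suc i)) D) (cdrop (depth (CESL A t)) G')) (plug (CESL A t) x') TN
      (mr + m2 + m') (er + e2 + e')"
      using r 1 by (auto intro!: es' simp: fun_eq_iff add_ac)
  qed (use r 1 in auto)
qed

lemma Y_repl: assumes "is_Y Y" "lty G (plug Y x) TN m e" shows "REPL Y G x TN m e (\<lambda>_. True)"
proof -
  obtain A N where Y: "is_A A" "is_N N" "Y = ccomp A N" using assms(1) unfolding is_Y_def by blast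
  have "lty G (plug A (plug N x)) TN m e" using assms(2) Y by simp
  from A_repl[OF Y(1) this] obtain GA mA eA GrA mrA erA where
    ra: "lty GA (plug N x) TN mA eA" "G = cadd GrA (cdrop (depth A) GA)" "m = mrA + mA" "e = erA + eA"
    "\<forall>x' G' m' e'. lty G' x' TN m' e' \<longrightarrow> (\<forall>i<depth A. G' i = GA i)
        \<longrightarrow> lty (cadd GrA (cdrop (depth A) G')) (plug A x') TN (mrA + m') (erA + e')"
    unfolding REPL_def by blast
  from N_repl[OF Y(2) ra(1)] obtain Gx Lx mx ex Gr mr er where
    r: "lty Gx x Lx mx ex" "GA = cadd Gr (cdrop (depth N) Gx)" "mA = mr + mx" "eA = er + ex"
    "\<forall>x' G' m' e'. lty G' x' Lx m' e' \<longrightarrow> (\<forall>i<depth N. G' i = Gx i)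
        \<longrightarrow> lty (cadd Gr (cdrop (depth N) G')) (plug N x') TN (mr + m') (er + e')"
    unfolding REPL_def by blast
  show ?thesis unfolding REPL_def
  proof (rule exI[of _ Gx], rule exI[of _ Lx], rule exI[of _ mx], rule exI[of _ ex],
      rule exI[of _ "cadd GrA (cdrop (depth A) Gr)"],
      rule exI[of _ "mrA + mr"], rule exI[of _ "erA + er"], intro conjI allI impI)
    show "G = cadd (cadd GrA (cdrop (depth A) Gr)) (cdrop (depth Y) Gx)"
      using ra r Y by (auto simp: fun_eq_iff add_ac)
  next
    fix x' G' m' e' assume h: "lty G' x' Lx m' e'" "\<forall>i<depth Y. G' i = Gx i"
    then have 1: "lty (cadd Gr (cdrop (depth N) G')) (plug N x') TN (mr + m') (er + e')"
      using r(5) Y by auto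
    have "\<forall>i<depth A. cadd Gr (cdrop (depth N) G') i = GA i"
      using h(2) r(2) Y by simp
    with 1 ra(5) have "lty (cadd GrA (cdrop (depth A) (cadd Gr (cdrop (depth N) G')))) (plug A (plug N x')) TN
       (mrA + (mr + m')) (erA + (er + e'))" by blast
    then show "lty (cadd (cadd GrA (cdrop (depth A) Gr)) (cdrop (depth Y) G')) (plug Y x') TN
       (mrA + mr + m') (erA + er + e')"
      using Y by (simp add: add_ac cadd_def cdrop_def)
  qed (use r ra in auto)
qed


lemma root_e_SR:
  assumes "root_e P s s'" "lty G s L m e"
    and R: "\<And>K G1 x m1 e1. P K \<Longrightarrow> lty G1 (plug K x) L m1 e1 \<Longrightarrow> REPL K G1 x L m1 e1 (\<lambda>_. True)"
  shows "e > 0 \<and> lty G s' L m (e - 1)"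
proof -
  obtain K u where K: "P K" "s = ES (plug K (Var (depth K))) u"
    "s' = ES (plug K (shift (Suc (depth K)) 0 u)) u" using assms(1) unfolding root_e_def by blast
  define d where "d = depth K"
  obtain G1 m1 e1 D m2 e2 where 1: "G = cadd (\<lambda>i. G1 (Suc i)) D" "m = m1 + m2"
   "e = e1 + e2" "lty G1 (plug K (Var d)) L m1 e1" "mty D u (G1 0 + {#TN#}) m2 e2"
    using lty_ES_inv[OF assms(2)[unfolded K(2)]] d_def by blast
  from R[OF K(1) 1(4)] obtain Gx Lx mx ex Gr mr er where
    r: "lty Gx (Var d) Lx mx ex" "G1 = cadd Gr (cdrop d Gx)" "m1 = mr + mx" "e1 = er + ex"
    "\<forall>x' G' m' e'. lty G' x' Lx m' e' \<longrightarrow> (\<forall>i<d. G' i = Gx i)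
        \<longrightarrow> lty (cadd Gr (cdrop d G')) (plug K x') L (mr + m') (er + e')"
    unfolding REPL_def d_def by blast
  have gx: "Gx = empty_ctx(d := {#Lx#})" "mx = 0" "ex = 1" using lty_Var_inv[OF r(1)] by auto
  have "G1 0 = Gr 0 + {#Lx#}" using r(2) gx by (simp add: empty_apply)
  then have "G1 0 + {#TN#} = {#Lx#} + (Gr 0 + {#TN#})" by (simp add: add_mset_commute)
  with 1(5) have "mty D u ({#Lx#} + (Gr 0 + {#TN#})) m2 e2" by simp
  from mty_split[OF this] obtain D1 D2 mu m2' eu e2' where
    sp: "mty D1 u {#Lx#} mu eu" "mty D2 u (Gr 0 + {#TN#}) m2' e2'" "D = cadd D1 D2" "m2 = mu + m2'" "e2 = eu + e2'"
    by blast
  have u1: "lty D1 u Lx mu eu" using sp(1) by (rule mty_single)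
  have u2: "lty (shc (Suc d) 0 D1) (shift (Suc d) 0 u) Lx mu eu" using u1 by (rule shift_typing)
  have ag: "\<forall>i<d. shc (Suc d) 0 D1 i = Gx i" using gx by (auto simp: shc_def empty_apply)
  have k: "lty (cadd Gr (cdrop d (shc (Suc d) 0 D1))) (plug K (shift (Suc d) 0 u)) L (mr + mu) (er + eu)"
    using r(5) u2 ag by blast
  have "lty G s' L (mr + mu + m2') (er + eu + e2')"
    unfolding K(3) d_def[symmetric]
    apply (rule es'[OF k])
    using sp(2) 1(1) sp(3) r(2) gx by (auto simp: shc_def fun_eq_iff empty_apply add_ac)
  then show ?thesis using 1 r gx sp by (simp add: add.assoc)
qed

lemma ystep_SR:
  assumes "ystep t k t'" "lty G t TN m e" "k \<noteq> Ygcv"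
  shows "\<exists>m' e'. lty G t' TN m' e' \<and> ((k = Ym \<and> m = Suc m' \<and> e' = e) \<or> (k \<noteq> Ym \<and> m' = m \<and> e = Suc e'))"
proof (cases k)
  case Ym
  then obtain Y s s' where h: "is_Y Y" "t = plug Y s" "t' = plug Y s'" "root_m s s'" using assms(1) by auto
  from Y_repl[OF h(1) assms(2)[unfolded h(2)]] obtain Gx Lx mx ex Gr mr er where
    r: "lty Gx s Lx mx ex" "G = cadd Gr (cdrop (depth Y) Gx)" "m = mr + mx" "e = er + ex"
    "\<forall>x' G' m' e'. lty G' x' Lx m' e' \<longrightarrow> (\<forall>i<depth Y. G' i = Gx i)
        \<longrightarrow> lty (cadd Gr (cdrop (depth Y) G')) (plug Y x') TN (mr + m') (er + e')"
    unfolding REPL_def by blast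
  from root_m_SR[OF h(4) r(1)] have "mx > 0" "lty Gx s' Lx (mx - 1) ex" by auto
  with r(5) have "lty G t' TN (mr + (mx - 1)) (er + ex)" using h(3) r(2) by blast
  then show ?thesis using Ym r \<open>mx > 0\<close> by (intro exI[of _ "mr + (mx - 1)"] exI[of _ e]) auto
next
  case YeAY
  then obtain A s s' where h: "is_A A" "t = plug A s" "t' = plug A s'" "root_e is_Y s s'" using assms(1) by auto
  from A_repl[OF h(1) assms(2)[unfolded h(2)]] obtain Gx mx ex Gr mr er where
    r: "lty Gx s TN mx ex" "G = cadd Gr (cdrop (depth A) Gx)" "m = mr + mx" "e = er + ex"
    "\<forall>x' G' m' e'. lty G' x' TN m' e' \<longrightarrow> (\<forall>i<depth A. G' i = Gx i)
        \<longrightarrow> lty (cadd Gr (cdrop (depth A) G')) (plug A x') TN (mr + m') (er + e')"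
    unfolding REPL_def by blast
  from root_e_SR[OF h(4) r(1) Y_repl] have "ex > 0" "lty Gx s' TN mx (ex - 1)" by auto
  with r(5) have "lty G t' TN (mr + mx) (er + (ex - 1))" using h(3) r(2) by blast
  then show ?thesis using YeAY r \<open>ex > 0\<close> by (intro exI[of _ m] exI[of _ "er + (ex - 1)"]) auto
next
  case YeYN
  then obtain Y s s' where h: "is_Y Y" "t = plug Y s" "t' = plug Y s'" "root_e is_N s s'" using assms(1) by auto
  from Y_repl[OF h(1) assms(2)[unfolded h(2)]] obtain Gx Lx mx ex Gr mr er where
    r: "lty Gx s Lx mx ex" "G = cadd Gr (cdrop (depth Y) Gx)" "m = mr + mx" "e = er + ex"
    "\<forall>x' G' m' e'. lty G' x' Lx m' e' \<longrightarrow> (\<forall>i<depth Y. G' i = Gx i)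
        \<longrightarrow> lty (cadd Gr (cdrop (depth Y) G')) (plug Y x') TN (mr + m') (er + e')"
    unfolding REPL_def by blast
  from root_e_SR[OF h(4) r(1) N_repl] have "ex > 0" "lty Gx s' Lx mx (ex - 1)" by auto
  with r(5) have "lty G t' TN (mr + mx) (er + (ex - 1))" using h(3) r(2) by blast
  then show ?thesis using YeYN r \<open>ex > 0\<close> by (intro exI[of _ m] exI[of _ "er + (ex - 1)"]) auto
next
  case Ygcv
  then show ?thesis using assms(3) by simp
qed


lemma answer_simps[simp]:
  "is_answer (Var i) = False" "is_answer (App a b) = False" "is_answer (Lam t) = True"
  "is_answer (ES a b) = (is_answer a \<and> is_answer b)"
  by (auto elim: is_answer.cases intro: is_answer.intros)

definition Sl :: "trm \<Rightarrow> bool" where "Sl t \<longleftrightarrow> (\<exists>S b. is_S S \<and> t = plug S (Lam b))"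

lemma Sl_ES: "Sl a \<Longrightarrow> Sl (ES a u)"
  unfolding Sl_def by (metis is_S.intros(2) plug.simps(4))

lemma Sl_S: "is_S A \<Longrightarrow> Sl s \<Longrightarrow> Sl (plug A s)"
  by (induction rule: is_S.induct) (auto intro: Sl_ES)

lemma Sl_Lam[simp]: "Sl (Lam t)"
  unfolding Sl_def by (rule exI[of _ Hole]) (auto intro: is_S.intros)

lemma answer_Sl: "is_answer a \<Longrightarrow> Sl a"
  by (induction rule: is_answer.induct) (auto intro: Sl_ES)

lemma A_dich: "is_A A \<Longrightarrow> is_S A \<or> (\<forall>x. Sl (plug A x))"
  by (induction rule: is_A.induct) (auto intro: is_S.intros Sl_ES answer_Sl)

lemma S_comp_N: "is_S A \<Longrightarrow> is_N N \<Longrightarrow> is_N (ccomp A N)"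
  by (induction rule: is_S.induct) (auto intro: is_N.intros)

lemma Y_dich: "is_Y Y \<Longrightarrow> is_N Y \<or> (\<forall>x. Sl (plug Y x))"
  unfolding is_Y_def using A_dich S_comp_N by fastforce

lemma N_is_Y: "is_N N \<Longrightarrow> is_Y N"
  unfolding is_Y_def by (rule exI[of _ Hole]) (auto intro: is_A.intros)

lemma A_is_Y: "is_A A \<Longrightarrow> is_Y A"
  unfolding is_Y_def by (rule exI[of _ A], rule exI[of _ Hole]) (auto intro: is_N.intros)

lemma Y_CESL: "is_Y Y \<Longrightarrow> is_Y (CESL Y t)"
  unfolding is_Y_def by (metis ccomp.simps(4) is_A.intros(3))

lemma Y_CESR: "is_answer a \<Longrightarrow> is_Y Y \<Longrightarrow> is_Y (CESR a Y)"
  unfolding is_Y_def by (metis ccomp.simps(5) is_A.intros(2))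

lemma yI_m: "is_Y Y \<Longrightarrow> root_m s s' \<Longrightarrow> ystep (plug Y s) Ym (plug Y s')" by auto
lemma yI_AY: "is_A Y \<Longrightarrow> root_e is_Y s s' \<Longrightarrow> ystep (plug Y s) YeAY (plug Y s')" by auto
lemma yI_YN: "is_Y Y \<Longrightarrow> root_e is_N s s' \<Longrightarrow> ystep (plug Y s) YeYN (plug Y s')" by auto
lemma yI_gcv: "is_Y Y \<Longrightarrow> root_gcv s s' \<Longrightarrow> ystep (plug Y s) Ygcv (plug Y s')" by auto

lemma ystep_CESL: "ystep t1 k t1' \<Longrightarrow> ystep (ES t1 t2) k (ES t1' t2)"
proof (cases k)
  case Ym
  assume "ystep t1 k t1'"
  then obtain Y s s' where h: "is_Y Y" "t1 = plug Y s" "t1' = plug Y s'" "root_m s s'" using Ym by auto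
  then show ?thesis using yI_m[OF Y_CESL[OF h(1)] h(4)] h Ym by simp
next
  case YeAY
  assume "ystep t1 k t1'"
  then obtain Y s s' where h: "is_A Y" "t1 = plug Y s" "t1' = plug Y s'" "root_e is_Y s s'" using YeAY by auto
  then show ?thesis using yI_AY[OF is_A.intros(3)[OF h(1)] h(4)] h YeAY by simp
next
  case YeYN
  assume "ystep t1 k t1'"
  then obtain Y s s' where h: "is_Y Y" "t1 = plug Y s" "t1' = plug Y s'" "root_e is_N s s'" using YeYN by auto
  then show ?thesis using yI_YN[OF Y_CESL[OF h(1)] h(4)] h YeYN by simp
next
  case Ygcv
  assume "ystep t1 k t1'"
  then obtain Y s s' where h: "is_Y Y" "t1 = plug Y s" "t1' = plug Y s'" "root_gcv s s'" using Ygcv by auto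
  then show ?thesis using yI_gcv[OF Y_CESL[OF h(1)] h(4)] h Ygcv by simp
qed

lemma ystep_CESR: "is_answer t1 \<Longrightarrow> ystep t2 k t2' \<Longrightarrow> ystep (ES t1 t2) k (ES t1 t2')"
proof (cases k)
  case Ym
  assume a: "is_answer t1" "ystep t2 k t2'"
  then obtain Y s s' where h: "is_Y Y" "t2 = plug Y s" "t2' = plug Y s'" "root_m s s'" using Ym by auto
  then show ?thesis using yI_m[OF Y_CESR[OF a(1) h(1)] h(4)] h Ym by simp
next
  case YeAY
  assume a: "is_answer t1" "ystep t2 k t2'"
  then obtain Y s s' where h: "is_A Y" "t2 = plug Y s" "t2' = plug Y s'" "root_e is_Y s s'" using YeAY by auto
  then show ?thesis using yI_AY[OF is_A.intros(2)[OF a(1) h(1)] h(4)] h YeAY by simp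
next
  case YeYN
  assume a: "is_answer t1" "ystep t2 k t2'"
  then obtain Y s s' where h: "is_Y Y" "t2 = plug Y s" "t2' = plug Y s'" "root_e is_N s s'" using YeYN by auto
  then show ?thesis using yI_YN[OF Y_CESR[OF a(1) h(1)] h(4)] h YeYN by simp
next
  case Ygcv
  assume a: "is_answer t1" "ystep t2 k t2'"
  then obtain Y s s' where h: "is_Y Y" "t2 = plug Y s" "t2' = plug Y s'" "root_gcv s s'" using Ygcv by auto
  then show ?thesis using yI_gcv[OF Y_CESR[OF a(1) h(1)] h(4)] h Ygcv by simp
qed

lemma ystep_App: "\<not> Sl t1 \<Longrightarrow> ystep t1 k t1' \<Longrightarrow> k \<noteq> Ygcv \<Longrightarrow> \<exists>k'. k' \<noteq> Ygcv \<and> ystep (App t1 t2) k' (App t1' t2)"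
proof (cases k)
  case Ym
  assume a: "\<not> Sl t1" "ystep t1 k t1'"
  then obtain Y s s' where h: "is_Y Y" "t1 = plug Y s" "t1' = plug Y s'" "root_m s s'" using Ym by auto
  from Y_dich[OF h(1)] a h have "is_N Y" by auto
  then have "is_Y (CAppL Y t2)" by (auto intro: N_is_Y is_N.intros)
  then have "ystep (App t1 t2) Ym (App t1' t2)" using yI_m[OF _ h(4), of "CAppL Y t2"] h by simp
  then show ?thesis by blast
next
  case YeYN
  assume a: "\<not> Sl t1" "ystep t1 k t1'"
  then obtain Y s s' where h: "is_Y Y" "t1 = plug Y s" "t1' = plug Y s'" "root_e is_N s s'" using YeYN by auto
  from Y_dich[OF h(1)] a h have "is_N Y" by auto
  then have "is_Y (CAppL Y t2)" by (auto intro: N_is_Y is_N.intros)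
  then have "ystep (App t1 t2) YeYN (App t1' t2)" using yI_YN[OF _ h(4), of "CAppL Y t2"] h by simp
  then show ?thesis by blast
next
  case YeAY
  assume a: "\<not> Sl t1" "ystep t1 k t1'"
  then obtain A s s' where h: "is_A A" "t1 = plug A s" "t1' = plug A s'" "root_e is_Y s s'" using YeAY by auto
  from A_dich[OF h(1)] a h have SA: "is_S A" by auto
  from h(4) obtain K u where K: "is_Y K" "s = ES (plug K (Var (depth K))) u"
    "s' = ES (plug K (shift (Suc (depth K)) 0 u)) u" unfolding root_e_def by blast
  have "is_N K"
  proof (rule ccontr)
    assume "\<not> is_N K"
    with Y_dich[OF K(1)] have "Sl (plug K (Var (depth K)))" by auto
    then have "Sl t1" using h(2) K(2) SA by (auto intro: Sl_S Sl_ES)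
    with a show False by simp
  qed
  then have "root_e is_N s s'" using K unfolding root_e_def by blast
  moreover have "is_Y (CAppL A t2)" using SA by (auto intro: N_is_Y is_N.intros S_comp_N[of A Hole, simplified])
  ultimately have "ystep (App t1 t2) YeYN (App t1' t2)" using yI_YN[of "CAppL A t2" s s'] h by simp
  then show ?thesis by blast
qed auto

lemma progress: "is_answer t \<or> (\<exists>k t'. k \<noteq> Ygcv \<and> ystep t k t') \<or> (\<exists>Y i. is_Y Y \<and> t = plug Y (Var (depth Y + i)))"
proof (induction t)
  case (Var x)
  then show ?case using N_is_Y[OF is_N.intros(1)]
    by (intro disjI2) (rule exI[of _ Hole], auto)
next
  case (Lam t)
  then show ?case by simp
next
  case (App t1 t2)
  show ?case
  proof (cases "Sl t1")
    case True
    then obtain S b where "is_S S" "t1 = plug S (Lam b)" unfolding Sl_def by blast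
    then have "root_m (App t1 t2) (plug S (ES b (shift (depth S) 0 t2)))"
      unfolding root_m_def by blast
    then have "ystep (App t1 t2) Ym (plug S (ES b (shift (depth S) 0 t2)))"
      using yI_m[OF N_is_Y[OF is_N.intros(1)]] by simp
    then show ?thesis by blast
  next
    case False
    then have na: "\<not> is_answer t1" using answer_Sl by blast
    from App.IH(1) na show ?thesis
    proof (elim disjE exE conjE)
      fix k t1' assume "k \<noteq> Ygcv" "ystep t1 k t1'"
      then show ?thesis using ystep_App[OF False] by blast
    next
      fix Y i assume Y: "is_Y Y" "t1 = plug Y (Var (depth Y + i))"
      with Y_dich[OF Y(1)] False have "is_N Y" by auto
      then have "is_Y (CAppL Y t2)" by (auto intro: N_is_Y is_N.intros)
      then show ?thesis using Y by (intro disjI2 disjI2) (rule exI[of _ "CAppL Y t2"], auto)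
    qed simp
  qed
next
  case (ES t1 t2)
  from ES.IH(1) show ?case
  proof (elim disjE exE conjE)
    assume a1: "is_answer t1"
    from ES.IH(2) show ?thesis
    proof (elim disjE exE conjE)
      fix k t2' assume "k \<noteq> Ygcv" "ystep t2 k t2'"
      then show ?thesis using ystep_CESR[OF a1] by blast
    next
      fix Y i assume Y: "is_Y Y" "t2 = plug Y (Var (depth Y + i))"
      then show ?thesis using Y_CESR[OF a1 Y(1)] by (intro disjI2 disjI2) (rule exI[of _ "CESR t1 Y"], auto)
    qed (use a1 in simp)
  next
    fix k t1' assume "k \<noteq> Ygcv" "ystep t1 k t1'"
    then show ?thesis using ystep_CESL by blast
  next
    fix Y i assume Y: "is_Y Y" "t1 = plug Y (Var (depth Y + i))"
    show ?thesis
    proof (cases i)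
      case 0
      have "root_e is_Y (ES t1 t2) (ES (plug Y (shift (Suc (depth Y)) 0 t2)) t2)"
        unfolding root_e_def using Y 0 by auto
      then have "ystep (ES t1 t2) YeAY (ES (plug Y (shift (Suc (depth Y)) 0 t2)) t2)"
        using yI_AY[OF is_A.intros(1)] by simp
      then show ?thesis by blast
    next
      case (Suc j)
      then show ?thesis using Y Y_CESL[OF Y(1)]
        by (intro disjI2 disjI2) (rule exI[of _ "CESL Y t2"], rule exI[of _ j], auto)
    qed
  qed
qed


lemma answer_plug: "is_answer (plug W s) \<Longrightarrow> is_A W \<and> is_answer s \<and> (\<forall>s'. is_answer s' \<longrightarrow> is_answer (plug W s'))"
  by (induction W) (auto intro: is_A.intros)

lemma answer_shift[simp]: "is_answer (shift n k t) = is_answer t"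
  by (induction t arbitrary: k) auto

lemma size_plug: "size (plug C x) + size y = size (plug C y) + size x"
  by (induction C) auto

lemma size_shift[simp]: "size (shift n k t) = size t"
  by (induction t arbitrary: k) auto

lemma size_plug_mono: "size x < size y \<Longrightarrow> size (plug C x) < size (plug C y)"
  using size_plug[of C x y] by simp

lemma answer_step: assumes "is_answer a" "wstep a a'"
  shows "\<exists>a''. ystep a Ygcv a'' \<and> is_answer a'' \<and> size a'' < size a"
proof -
  obtain W s s' where h: "a = plug W s" "a' = plug W s'"
    "root_m s s' \<or> root_e (\<lambda>_. True) s s' \<or> root_gcv s s'" using assms(2) unfolding wstep_def by blast
  from answer_plug[OF assms(1)[unfolded h(1)]] have W: "is_A W" "is_answer s"
    "\<forall>s'. is_answer s' \<longrightarrow> is_answer (plug W s')" by auto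
  have "\<not> root_m s s'" using W(2) unfolding root_m_def by auto
  moreover have "\<not> root_e (\<lambda>_. True) s s'"
  proof
    assume "root_e (\<lambda>_. True) s s'"
    then obtain K u where "s = ES (plug K (Var (depth K))) u" unfolding root_e_def by blast
    with W(2) have "is_answer (plug K (Var (depth K)))" by simp
    from answer_plug[OF this] show False by simp
  qed
  ultimately have "root_gcv s s'" using h(3) by blast
  then obtain r S v where g: "is_S S" "is_value v" "s = ES (shift 1 0 r) (plug S v)"
    "s' = plug S (shift (depth S) 0 r)" unfolding root_gcv_def by blast
  have "is_answer (shift 1 0 r)" "is_answer (plug S v)" using W(2) g(3) by auto
  then have as': "is_answer s'" using answer_plug[of S v] g(4) by simp
  have "size (plug S (shift (depth S) 0 r)) + size v = size (plug S v) + size r"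
    using size_plug[of S "shift (depth S) 0 r" v] by simp
  moreover have "size v > 0" using g(2) by (cases rule: is_value.cases) auto
  ultimately have "size s' < size s" using g by simp
  then have "size (plug W s') < size a" using h(1) by (simp add: size_plug_mono)
  moreover have "ystep a Ygcv (plug W s')" using yI_gcv[OF A_is_Y[OF W(1)] \<open>root_gcv s s'\<close>] h(1) by simp
  ultimately show ?thesis using W(3) as' by blast
qed

lemma answer_norm: "is_answer a \<Longrightarrow> \<exists>n ks. ysteps a ks n \<and> w_normal n \<and> (\<forall>k\<in>set ks. k = Ygcv)"
proof (induction a rule: measure_induct_rule[where f = size])
  case (less a)
  show ?case
  proof (cases "w_normal a")
    case True
    then show ?thesis using ysteps.refl by fastforce
  next
    case False
    then obtain a' where "wstep a a'" unfolding w_normal_def by blast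
    from answer_step[OF less.prems this] obtain a'' where
      s: "ystep a Ygcv a''" "is_answer a''" "size a'' < size a" by blast
    from less.IH[OF s(3) s(2)] obtain n ks where "ysteps a'' ks n" "w_normal n" "\<forall>k\<in>set ks. k = Ygcv" by blast
    then show ?thesis using ysteps.step[OF s(1)] by fastforce
  qed
qed

lemma stuck_typed: assumes "is_Y Y" "lty G (plug Y (Var (depth Y + i))) TN m e" shows "G i \<noteq> {#}"
proof -
  from Y_repl[OF assms] obtain Gx Lx mx ex Gr where
    r: "lty Gx (Var (depth Y + i)) Lx mx ex" "G = cadd Gr (cdrop (depth Y) Gx)"
    unfolding REPL_def by blast
  from lty_Var_inv[OF r(1)] have "Gx = empty_ctx(depth Y + i := {#Lx#})" by simp
  then show ?thesis using r(2) by (simp add: add.commute)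
qed

lemma main: "lty empty_ctx t TN m e \<Longrightarrow> \<exists>n ks. ysteps t ks n \<and> w_normal n
           \<and> length (filter (\<lambda>k. k = Ym) ks) = m
           \<and> length (filter (\<lambda>k. k = YeAY \<or> k = YeYN) ks) = e"
proof (induction "m + e" arbitrary: t m e rule: less_induct)
  case less
  from progress[of t] show ?case
  proof (elim disjE exE conjE)
    assume a: "is_answer t"
    from answer_TN[OF a less.prems] have "m = 0" "e = 0" by auto
    moreover from answer_norm[OF a] obtain n ks where "ysteps t ks n" "w_normal n" "\<forall>k\<in>set ks. k = Ygcv" by blast
    moreover then have "filter (\<lambda>k. k = Ym) ks = []" "filter (\<lambda>k. k = YeAY \<or> k = YeYN) ks = []"
      by (auto simp: filter_empty_conv)
    ultimately show ?thesis by auto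
  next
    fix k t' assume k: "k \<noteq> Ygcv" "ystep t k t'"
    from ystep_SR[OF k(2) less.prems k(1)] obtain m' e' where
      t': "lty empty_ctx t' TN m' e'" "(k = Ym \<and> m = Suc m' \<and> e' = e) \<or> (k \<noteq> Ym \<and> m' = m \<and> e = Suc e')" by blast
    then have "m' + e' < m + e" by auto
    from less.hyps[OF this t'(1)] obtain n ks where
      ih: "ysteps t' ks n" "w_normal n" "length (filter (\<lambda>k. k = Ym) ks) = m'"
        "length (filter (\<lambda>k. k = YeAY \<or> k = YeYN) ks) = e'" by blast
    have "ysteps t (k # ks) n" using ysteps.step[OF k(2) ih(1)] .
    moreover have "length (filter (\<lambda>k. k = Ym) (k # ks)) = m"
      "length (filter (\<lambda>k. k = YeAY \<or> k = YeYN) (k # ks)) = e"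
      using t'(2) ih k(1) by (cases k; auto)+
    ultimately show ?thesis using ih(2) by blast
  next
    fix Y i assume "is_Y Y" "t = plug Y (Var (depth Y + i))"
    from stuck_typed[OF this(1) less.prems[unfolded this(2)]] show ?thesis by (simp add: empty_apply)
  qed
qed

theorem theorem12p5:
  assumes "closed t"
    and "lty empty_ctx t TN m e"
  shows "\<exists>n ks. ysteps t ks n \<and> w_normal n
           \<and> length (filter (\<lambda>k. k = Ym) ks) = m
           \<and> length (filter (\<lambda>k. k = YeAY \<or> k = YeYN) ks) = e"
  using main[OF assms(2)] .

end
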